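(* Let $X,Y\in su(2)\cong\mathbb R^3$ be unit vectors with angle $\alpha\in(0,\pi)$ between them. (a) If $s_1,s_2\in\mathbb R$ satisfy $\cos(\alpha)\tan(s_1)\tan(s_2)=1$, then $\varphi(\exp(s_1X)\exp(s_2Y))$ is a rotation by angle $\pi$, and $\exp(s_1X)\exp(s_2Y)=-\exp(-s_2Y)\exp(-s_1X)$. (b) Let $s_1,s_2,s_3\in\mathbb R$ with $\cos s_2\neq0$, and let $\psi\in(-\pi/2,\pi/2]$ satisfy $\tan\psi=\cos\alpha\tan s_2$. Then $\exp(s_1X)\exp(s_2Y)\exp(s_3X)=\exp(s_1'X)\exp(-s_2Y)\exp(s_3'X)$, where $s_1'=s_1+\psi-\frac{\pi}{2}$ and $s_3'=s_3+\psi+\frac{\pi}{2}$.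
   Context: $SU(2)$ is the group of unit quaternions, $su(2)$ the pure quaternions $\mathrm{span}\{i,j,k\}$ identified with $\mathbb R^3$ via $i\mapsto e_1,j\mapsto e_2,k\mapsto e_3$ (so the Euclidean inner product and angles transfer). For a unit pure quaternion $X$, $\exp(sX)=\cos s+X\sin s$ (exponential in $\mathbb H$). $\varphi:SU(2)\to SO(3)$ is the double cover with $\varphi(\exp(v))=R(2v)$, $R(w)$ being rotation by angle $|w|$ about $w/|w|$. *)

theory Defs
  imports "HOL-Analysis.Analysis"
begin

text \<open>Quaternions as (scalar part, vector part), the vector part living in real^3,
  with i, j, k corresponding to the standard basis vectors e1, e2, e3.\<close>

datatype quat = Quat (qre: real) (qim: "real^3")

definition qmult :: "quat \<Rightarrow> quat \<Rightarrow> quat" (infixl \<open>\<otimes>\<^sub>q\<close> 70) where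
  "qmult p q = Quat (qre p * qre q - qim p \<bullet> qim q)
                    (qre p *\<^sub>R qim q + qre q *\<^sub>R qim p + cross3 (qim p) (qim q))"

definition qneg :: "quat \<Rightarrow> quat" where
  "qneg q = Quat (- qre q) (- qim q)"

definition qconj :: "quat \<Rightarrow> quat" where
  "qconj q = Quat (qre q) (- qim q)"

text \<open>Pure quaternion associated with a vector of su(2) = R^3.\<close>
definition pure :: "real^3 \<Rightarrow> quat" where
  "pure v = Quat 0 v"

text \<open>Quaternionic exponential (closed form of the exponential series in H):
  exp(a + v) = e^a (cos |v| + sin |v| v/|v|).\<close>
definition qexp :: "quat \<Rightarrow> quat" where
  "qexp q = Quat (exp (qre q) * cos (norm (qim q)))
                 ((exp (qre q) * sin (norm (qim q)) / norm (qim q)) *\<^sub>R qim q)"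

text \<open>The double cover SU(2) -> SO(3): q acts on R^3 = su(2) by conjugation.\<close>
definition phi :: "quat \<Rightarrow> real^3 \<Rightarrow> real^3" where
  "phi q v = qim (q \<otimes>\<^sub>q pure v \<otimes>\<^sub>q qconj q)"

text \<open>R(w): rotation by angle |w| about the axis w/|w| (Rodrigues' formula);
  R(0) is the identity.\<close>
definition rot :: "real^3 \<Rightarrow> real^3 \<Rightarrow> real^3" where
  "rot w v = (let u = (1 / norm w) *\<^sub>R w; t = norm w in
     cos t *\<^sub>R v + sin t *\<^sub>R cross3 u v + ((1 - cos t) * (u \<bullet> v)) *\<^sub>R u)"

end

theory Submission
  imports Defs
begin

lemma qexp_unit:
  assumes "norm X = 1"
  shows "qexp (pure (s *\<^sub>R X)) = Quat (cos s) (sin s *\<^sub>R X)"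
proof (cases "s = 0")
  case True thus ?thesis by (simp add: qexp_def pure_def)
next
  case False
  have "sin \<bar>s\<bar> / \<bar>s\<bar> * s = sin s"
    using False by (cases "s \<ge> 0") (auto simp: field_simps)
  thus ?thesis using assms by (simp add: qexp_def pure_def)
qed

lemma qmult_Quat: "Quat a u \<otimes>\<^sub>q Quat b v = Quat (a*b - u \<bullet> v) (a *\<^sub>R v + b *\<^sub>R u + cross3 u v)"
  by (simp add: qmult_def)

lemma cross_cross: "cross3 (cross3 a b) c = (a \<bullet> c) *\<^sub>R b - (b \<bullet> c) *\<^sub>R a"
  unfolding vec_eq_iff forall_3 by (simp add: cross3_simps)

lemma core:
  fixes X Y :: "real^3"
  assumes X: "norm X = 1" and Y: "norm Y = 1"
    and h: "sin p * cos s = cos p * (X \<bullet> Y) * sin s"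
  shows "qexp (pure ((p - pi/2) *\<^sub>R X)) \<otimes>\<^sub>q qexp (pure ((- s) *\<^sub>R Y)) \<otimes>\<^sub>q qexp (pure ((p + pi/2) *\<^sub>R X))
    = qexp (pure (s *\<^sub>R Y))"
proof -
  have XX: "X$1*X$1 + X$2*X$2 + X$3*X$3 = 1" using X by (simp add: norm_eq_1 inner_vec_def sum_3)
  have h': "sin p * cos s = cos p * (X$1*Y$1 + X$2*Y$2 + X$3*Y$3) * sin s" using h by (simp add: inner_vec_def sum_3)
  have sc: "sin p * sin p + cos p * cos p = 1" by (metis sin_cos_squared_add power2_eq_square)
  show ?thesis
    unfolding qexp_unit[OF X] qexp_unit[OF Y]
    apply (simp add: qmult_Quat cos_diff sin_diff cos_add sin_add)
    apply (simp add: vec_eq_iff forall_3 cross_components inner_vec_def sum_3)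
    using XX h' sc by algebra
qed

lemma qmult_assoc: "(p \<otimes>\<^sub>q q) \<otimes>\<^sub>q r = p \<otimes>\<^sub>q (q \<otimes>\<^sub>q r)"
  by (cases p; cases q; cases r)
     (simp add: qmult_Quat vec_eq_iff forall_3 cross_components inner_vec_def sum_3 algebra_simps)

lemma qexp_add:
  assumes X: "norm X = 1"
  shows "qexp (pure (a *\<^sub>R X)) \<otimes>\<^sub>q qexp (pure (b *\<^sub>R X)) = qexp (pure ((a+b) *\<^sub>R X))"
proof -
  have XX: "X \<bullet> X = 1" using X by (simp add: norm_eq_1)
  show ?thesis unfolding qexp_unit[OF X]
    by (simp add: qmult_Quat XX cos_add sin_add algebra_simps cross_mult_left cross_mult_right)
qed

lemma phi_pure:
  assumes u: "norm u = 1"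
  shows "phi (Quat 0 u) = rot (pi *\<^sub>R u)"
proof
  fix v
  have uu: "u$1*u$1 + u$2*u$2 + u$3*u$3 = 1" using u by (simp add: norm_eq_1 inner_vec_def sum_3)
  have n: "norm (pi *\<^sub>R u) = pi" using u by simp
  have e: "(1 / pi) *\<^sub>R (pi *\<^sub>R u) = u" by simp
  show "phi (Quat 0 u) v = rot (pi *\<^sub>R u) v"
    unfolding rot_def Let_def n e
    apply (simp add: phi_def pure_def qconj_def qmult_Quat)
    apply (simp add: vec_eq_iff forall_3 cross_components inner_vec_def sum_3)
    using uu by algebra
qed
theorem proposition4p2:
  fixes X Y :: "real^3" and \<alpha> :: real
  assumes "norm X = 1" and "norm Y = 1"
    and "\<alpha> = arccos (X \<bullet> Y)"
    and "0 < \<alpha>" and "\<alpha> < pi"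
  shows "(\<forall>s1 s2 :: real. cos \<alpha> * tan s1 * tan s2 = 1 \<longrightarrow>
            (\<exists>u :: real^3. norm u = 1 \<and>
               phi (qexp (pure (s1 *\<^sub>R X)) \<otimes>\<^sub>q qexp (pure (s2 *\<^sub>R Y))) = rot (pi *\<^sub>R u)) \<and>
            qexp (pure (s1 *\<^sub>R X)) \<otimes>\<^sub>q qexp (pure (s2 *\<^sub>R Y)) =
              qneg (qexp (pure ((- s2) *\<^sub>R Y)) \<otimes>\<^sub>q qexp (pure ((- s1) *\<^sub>R X))))
       \<and> (\<forall>s1 s2 s3 \<psi> :: real. cos s2 \<noteq> 0 \<longrightarrow>
            - (pi / 2) < \<psi> \<longrightarrow> \<psi> \<le> pi / 2 \<longrightarrow> cos \<psi> \<noteq> 0 \<longrightarrow>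
            tan \<psi> = cos \<alpha> * tan s2 \<longrightarrow>
            qexp (pure (s1 *\<^sub>R X)) \<otimes>\<^sub>q qexp (pure (s2 *\<^sub>R Y)) \<otimes>\<^sub>q qexp (pure (s3 *\<^sub>R X)) =
            qexp (pure ((s1 + \<psi> - pi / 2) *\<^sub>R X)) \<otimes>\<^sub>q qexp (pure ((- s2) *\<^sub>R Y))
              \<otimes>\<^sub>q qexp (pure ((s3 + \<psi> + pi / 2) *\<^sub>R X)))"
proof -
  have XX: "X$1*X$1 + X$2*X$2 + X$3*X$3 = 1" using assms(1) by (simp add: norm_eq_1 inner_vec_def sum_3)
  have YY: "Y$1*Y$1 + Y$2*Y$2 + Y$3*Y$3 = 1" using assms(2) by (simp add: norm_eq_1 inner_vec_def sum_3)
  have "\<bar>X \<bullet> Y\<bar> \<le> 1" using Cauchy_Schwarz_ineq2[of X Y] assms(1,2) by simp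
  hence ca: "cos \<alpha> = X \<bullet> Y" using assms(3) by (simp add: cos_arccos_abs)
  have A: "cos \<alpha> * tan s1 * tan s2 = 1 \<Longrightarrow>
            (\<exists>u :: real^3. norm u = 1 \<and>
               phi (qexp (pure (s1 *\<^sub>R X)) \<otimes>\<^sub>q qexp (pure (s2 *\<^sub>R Y))) = rot (pi *\<^sub>R u)) \<and>
            qexp (pure (s1 *\<^sub>R X)) \<otimes>\<^sub>q qexp (pure (s2 *\<^sub>R Y)) =
              qneg (qexp (pure ((- s2) *\<^sub>R Y)) \<otimes>\<^sub>q qexp (pure ((- s1) *\<^sub>R X)))" for s1 s2
  proof -
    assume h: "cos \<alpha> * tan s1 * tan s2 = 1"
    have c1: "cos s1 \<noteq> 0" using h by (auto simp: tan_def)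
    have c2: "cos s2 \<noteq> 0" using h by (auto simp: tan_def)
    have h1: "(X \<bullet> Y) * sin s1 * sin s2 = cos s1 * cos s2"
      using h c1 c2 unfolding ca tan_def by (simp add: field_simps)
    have h1': "(X$1*Y$1 + X$2*Y$2 + X$3*Y$3) * sin s1 * sin s2 = cos s1 * cos s2"
      using h1 by (simp add: inner_vec_def sum_3)
    have sc1: "sin s1 * sin s1 + cos s1 * cos s1 = 1" by (metis sin_cos_squared_add power2_eq_square)
    have sc2: "sin s2 * sin s2 + cos s2 * cos s2 = 1" by (metis sin_cos_squared_add power2_eq_square)
    define u where "u = cos s1 *\<^sub>R (sin s2 *\<^sub>R Y) + cos s2 *\<^sub>R (sin s1 *\<^sub>R X) + cross3 (sin s1 *\<^sub>R X) (sin s2 *\<^sub>R Y)"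
    have q: "qexp (pure (s1 *\<^sub>R X)) \<otimes>\<^sub>q qexp (pure (s2 *\<^sub>R Y)) = Quat 0 u"
      unfolding qexp_unit[OF assms(1)] qexp_unit[OF assms(2)] u_def
      using h1 by (simp add: qmult_Quat mult_ac)
    have nu: "norm u = 1"
      unfolding norm_eq_1 u_def
      apply (simp add: cross_components inner_vec_def sum_3)
      using XX YY h1' sc1 sc2 by algebra
    have q2: "qneg (qexp (pure ((- s2) *\<^sub>R Y)) \<otimes>\<^sub>q qexp (pure ((- s1) *\<^sub>R X))) = Quat 0 u"
      unfolding qexp_unit[OF assms(1)] qexp_unit[OF assms(2)] u_def
      apply (simp add: qmult_Quat qneg_def)
      apply (simp add: vec_eq_iff forall_3 cross_components inner_vec_def sum_3)
      using h1' by algebra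
    show ?thesis using q q2 nu phi_pure[OF nu] by auto
  qed
  have B: "cos s2 \<noteq> 0 \<Longrightarrow> cos \<psi> \<noteq> 0 \<Longrightarrow>
            tan \<psi> = cos \<alpha> * tan s2 \<Longrightarrow>
            qexp (pure (s1 *\<^sub>R X)) \<otimes>\<^sub>q qexp (pure (s2 *\<^sub>R Y)) \<otimes>\<^sub>q qexp (pure (s3 *\<^sub>R X)) =
            qexp (pure ((s1 + \<psi> - pi / 2) *\<^sub>R X)) \<otimes>\<^sub>q qexp (pure ((- s2) *\<^sub>R Y))
              \<otimes>\<^sub>q qexp (pure ((s3 + \<psi> + pi / 2) *\<^sub>R X))" for s1 s2 s3 \<psi>
  proof -
    assume c2: "cos s2 \<noteq> 0" and cp: "cos \<psi> \<noteq> 0" and t: "tan \<psi> = cos \<alpha> * tan s2"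
    have h: "sin \<psi> * cos s2 = cos \<psi> * (X \<bullet> Y) * sin s2"
      using t c2 cp unfolding ca tan_def by (simp add: field_simps)
    let ?E = "\<lambda>a. qexp (pure (a *\<^sub>R X))"
    have e1: "?E (s1 + \<psi> - pi/2) = ?E s1 \<otimes>\<^sub>q ?E (\<psi> - pi/2)"
      using qexp_add[OF assms(1), of s1 "\<psi> - pi/2"] by (simp add: algebra_simps)
    have e3: "?E (s3 + \<psi> + pi/2) = ?E (\<psi> + pi/2) \<otimes>\<^sub>q ?E s3"
      using qexp_add[OF assms(1), of "\<psi> + pi/2" s3] by (simp add: algebra_simps)
    note co = core[OF assms(1,2) h]
    have "?E (s1 + \<psi> - pi/2) \<otimes>\<^sub>q qexp (pure ((- s2) *\<^sub>R Y)) \<otimes>\<^sub>q ?E (s3 + \<psi> + pi/2)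
      = ?E s1 \<otimes>\<^sub>q ((?E (\<psi> - pi/2) \<otimes>\<^sub>q qexp (pure ((- s2) *\<^sub>R Y)) \<otimes>\<^sub>q ?E (\<psi> + pi/2)) \<otimes>\<^sub>q ?E s3)"
      unfolding e1 e3 by (simp only: qmult_assoc)
    also have "\<dots> = ?E s1 \<otimes>\<^sub>q (qexp (pure (s2 *\<^sub>R Y)) \<otimes>\<^sub>q ?E s3)"
      by (simp only: co)
    finally show ?thesis by (simp only: qmult_assoc)
  qed
  show ?thesis using A B by blast
qed
end
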